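(* Let $E$ be an equivalence relation on a Polish space $X$. If $E$ is Borel graphable, then its Friedman–Stanley jump $E^+$ is also Borel graphable.
   Context: $E$ is Borel graphable if there is a Borel simple undirected graph $G\subseteq X\times X$ whose connectedness relation (connected by a finite path) equals $E$. The Friedman–Stanley jump $E^+$ is the equivalence relation on $X^\mathbb{N}$ given by $(x_i)E^+(y_i)$ iff $\{[x_i]_E:i\in\mathbb{N}\}=\{[y_i]_E:i\in\mathbb{N}\}$. *)

theory Defs
  imports "HOL-Analysis.Analysis"
begin

text \<open>A (Borel) simple undirected graph on the whole space is a symmetric, irreflexive
  Borel subset of X \<times> X. Its connectedness relation (connected by a finite path, including
  the trivial path) is its reflexive-transitive closure.\<close>

definition borel_graphable :: "('a::topological_space \<times> 'a) set \<Rightarrow> bool" where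
  "borel_graphable E \<longleftrightarrow>
     (\<exists>G. G \<in> sets borel \<and> sym G \<and> irrefl G \<and> G\<^sup>* = E)"

definition fs_jump :: "('a \<times> 'a) set \<Rightarrow> ((nat \<Rightarrow> 'a) \<times> (nat \<Rightarrow> 'a)) set" where
  "fs_jump E = {(x, y). (\<lambda>i. E `` {x i}) ` UNIV = (\<lambda>i. E `` {y i}) ` UNIV}"

end

theory Submission
  imports Defs "HOL-Library.Nat_Bijection"
begin

type_synonym 'a pp = "(nat\<Rightarrow>'a)\<times>(nat\<Rightarrow>'a)"

lemma cs_cont: "continuous_on UNIV (snd :: 'a::topological_space pp \<Rightarrow> _)"
  by (rule continuous_on_snd[OF continuous_on_id', simplified])
lemma cf_cont: "continuous_on UNIV (fst :: 'a::topological_space pp \<Rightarrow> _)"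
  by (rule continuous_on_fst[OF continuous_on_id', simplified])
lemma cont_coord1: "continuous_on UNIV (\<lambda>p::'a::topological_space pp. snd p k)"
  by (metis continuous_on_product_then_coordinatewise cs_cont)
lemma cont_coord2: "continuous_on UNIV (\<lambda>p::'a::topological_space pp. fst p k)"
  by (metis continuous_on_product_then_coordinatewise cf_cont)
lemmas cont_coord = cont_coord1 cont_coord2

lemma pred_eq_atom:
  fixes f g :: "'a::polish_space pp \<Rightarrow> 'a"
  assumes "continuous_on UNIV f" "continuous_on UNIV g"
  shows "Measurable.pred borel (\<lambda>p. f p = g p)"
  using measurable_equality_set[OF borel_measurable_continuous_onI[OF assms(1)]
     borel_measurable_continuous_onI[OF assms(2)]]
  by (simp add: pred_def)

lemma pred_G_atom:
  fixes f g :: "'a::polish_space pp \<Rightarrow> 'a"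
  assumes "continuous_on UNIV f" "continuous_on UNIV g" "G \<in> sets borel"
  shows "Measurable.pred borel (\<lambda>p. (f p, g p) \<in> G)"
proof -
  have "(\<lambda>p. (f p, g p)) \<in> borel_measurable borel"
    by (intro borel_measurable_continuous_onI continuous_on_Pair assms)
  from measurable_sets[OF this assms(3)] show ?thesis
    by (simp add: pred_def vimage_def)
qed

definition Rp :: "('a \<times> 'a) set \<Rightarrow> (nat \<Rightarrow> 'a) \<Rightarrow> (nat \<Rightarrow> 'a) \<Rightarrow> bool" where
  "Rp G A B \<longleftrightarrow> (\<forall>k. (\<exists>j. B k = A j) \<or> (\<exists>m\<in>{..<k}. B k = B m \<or> (B m, B k) \<in> G))
     \<and> (\<forall>k. \<exists>j. A k = B j)"

lemma pred_Rp:
  fixes G :: "('a::polish_space \<times> 'a) set"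
  assumes G: "G \<in> sets borel"
    and fc: "continuous_on UNIV (F::'a pp \<Rightarrow> nat \<Rightarrow> 'a)" and gc: "continuous_on UNIV (Q::'a pp \<Rightarrow> nat \<Rightarrow> 'a)"
  shows "Measurable.pred borel (\<lambda>p. Rp G (F p) (Q p))"
proof -
  have f: "continuous_on UNIV (\<lambda>p. F p k)" for k
    by (rule continuous_on_product_then_coordinatewise[OF fc])
  have g: "continuous_on UNIV (\<lambda>p. Q p k)" for k
    by (rule continuous_on_product_then_coordinatewise[OF gc])
  have a1: "Measurable.pred borel (\<lambda>p. Q p k = F p j)" for k j by (rule pred_eq_atom[OF g f])
  have a2: "Measurable.pred borel (\<lambda>p. Q p k = Q p j)" for k j by (rule pred_eq_atom[OF g g])
  have a3: "Measurable.pred borel (\<lambda>p. (Q p j, Q p k) \<in> G)" for k j by (rule pred_G_atom[OF g g G])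
  have a4: "Measurable.pred borel (\<lambda>p. F p k = Q p j)" for k j by (rule pred_eq_atom[OF f g])
  have b1: "Measurable.pred borel (\<lambda>p. \<forall>k. (\<exists>j. Q p k = F p j) \<or> (\<exists>m\<in>{..<k}. Q p k = Q p m \<or> (Q p m, Q p k) \<in> G))"
    apply (rule pred_intros_countable(1))
    apply (rule pred_intros_logic(5))
     apply (rule pred_intros_countable(2))
     apply (rule a1)
    apply (rule pred_intros_countable_bounded(4))
    apply (rule pred_intros_logic(5))
     apply (rule a2)
    apply (rule a3)
    done
  have b2: "Measurable.pred borel (\<lambda>p. \<forall>k. \<exists>j. F p k = Q p j)"
    apply (rule pred_intros_countable(1))
    apply (rule pred_intros_countable(2))
    apply (rule a4)
    done
  show ?thesis
    unfolding Rp_def by (rule pred_intros_logic(3)[OF b1 b2])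
qed

lemma H_borel:
  fixes G :: "('a::polish_space \<times> 'a) set"
  assumes G: "G \<in> sets borel"
  shows "{p::'a pp. (Rp G (fst p) (snd p) \<or> Rp G (snd p) (fst p)) \<and> (\<exists>k. fst p k \<noteq> snd p k)} \<in> sets borel"
proof -
  note cf = cf_cont[where 'a='a] and cs = cs_cont[where 'a='a]
  have b1: "Measurable.pred borel (\<lambda>p::'a pp. Rp G (fst p) (snd p))" by (rule pred_Rp[OF G cf cs])
  have b2: "Measurable.pred borel (\<lambda>p::'a pp. Rp G (snd p) (fst p))" by (rule pred_Rp[OF G cs cf])
  have b3: "Measurable.pred borel (\<lambda>p::'a pp. fst p k \<noteq> snd p k)" for k
    by (rule pred_intros_logic(2)[OF pred_eq_atom[OF cont_coord(2) cont_coord(1)]])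
  have "Measurable.pred borel (\<lambda>p::'a pp. (Rp G (fst p) (snd p) \<or> Rp G (snd p) (fst p)) \<and> (\<exists>k. fst p k \<noteq> snd p k))"
    by (rule pred_intros_logic(3)[OF pred_intros_logic(5)[OF b1 b2] pred_intros_countable(2)[OF b3]])
  then have "{p::'a pp \<in> space borel. (Rp G (fst p) (snd p) \<or> Rp G (snd p) (fst p)) \<and> (\<exists>k. fst p k \<noteq> snd p k)} \<in> sets borel"
    by (simp only: pred_def)
  then show ?thesis by (simp only: space_borel UNIV_I simp_thms)
qed

lemma prod_encode_less_Suc: "prod_encode (n, k) < prod_encode (n, Suc k)"
  by (simp add: prod_encode_def)

lemma Rp_sound:
  assumes eq: "equiv UNIV E" and GE: "G \<subseteq> E" and R: "Rp G A B"
  shows "(A, B) \<in> fs_jump E"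
proof -
  have cls: "\<exists>j. E``{B k} = E``{A j}" for k
  proof (induction k rule: less_induct)
    case (less k)
    from R have "\<forall>k. (\<exists>j. B k = A j) \<or> (\<exists>m\<in>{..<k}. B k = B m \<or> (B m, B k) \<in> G)"
      unfolding Rp_def by (rule conjunct1)
    then have "(\<exists>j. B k = A j) \<or> (\<exists>m\<in>{..<k}. B k = B m \<or> (B m, B k) \<in> G)" by (rule spec)
    then show ?case
    proof
      assume "\<exists>j. B k = A j" then show ?thesis by auto
    next
      assume "\<exists>m\<in>{..<k}. B k = B m \<or> (B m, B k) \<in> G"
      then obtain m where m: "m < k" "B k = B m \<or> (B m, B k) \<in> G" by auto
      from m(2) have "(B m, B k) \<in> E"
      proof
        assume "B k = B m" then show ?thesis using eq by (simp add: equiv_def refl_on_def)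
      next
        assume "(B m, B k) \<in> G" then show ?thesis using GE by blast
      qed
      then have "E``{B m} = E``{B k}" by (rule equiv_class_eq[OF eq])
      then have "E``{B k} = E``{B m}" by (rule sym)
      moreover obtain j where "E``{B m} = E``{A j}" using less.IH[OF m(1)] by (rule exE)
      ultimately show ?thesis by (intro exI[of _ j]) simp
    qed
  qed
  have "(\<lambda>i. E `` {A i}) ` UNIV = (\<lambda>i. E `` {B i}) ` UNIV"
  proof
    show "(\<lambda>i. E `` {A i}) ` UNIV \<subseteq> (\<lambda>i. E `` {B i}) ` UNIV"
    proof
      fix S assume "S \<in> (\<lambda>i. E `` {A i}) ` UNIV"
      then obtain i where i: "S = E `` {A i}" by (rule imageE)
      have "\<forall>k. \<exists>j. A k = B j" using R unfolding Rp_def by (rule conjunct2)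
      then obtain j where "A i = B j" by blast
      then have "S = E `` {B j}" using i by simp
      then show "S \<in> (\<lambda>i. E `` {B i}) ` UNIV" by (rule range_eqI)
    qed
    show "(\<lambda>i. E `` {B i}) ` UNIV \<subseteq> (\<lambda>i. E `` {A i}) ` UNIV"
    proof
      fix S assume "S \<in> (\<lambda>i. E `` {B i}) ` UNIV"
      then obtain i where i: "S = E `` {B i}" by (rule imageE)
      from cls obtain j where "E``{B i} = E``{A j}" by (rule exE)
      then have "S = E `` {A j}" using i by simp
      then show "S \<in> (\<lambda>i. E `` {A i}) ` UNIV" by (rule range_eqI)
    qed
  qed
  then show ?thesis unfolding fs_jump_def by simp
qed

lemma walk_exists:
  assumes "(a, b) \<in> G\<^sup>*"
  shows "\<exists>N f. f 0 = a \<and> f N = b \<and> (\<forall>i<N. (f i, f (Suc i)) \<in> G)"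
  using assms by (auto simp: rtrancl_power relpow_fun_conv)

lemma Rp_complete:
  assumes eq: "equiv UNIV E" and GE: "G\<^sup>* = E" and sG: "sym G"
    and xy: "(x, y) \<in> fs_jump E"
  shows "\<exists>W1 W2. Rp G x W1 \<and> Rp G W1 W2 \<and> Rp G y W2"
proof -
  from xy have img: "(\<lambda>i. E `` {x i}) ` UNIV = (\<lambda>i. E `` {y i}) ` UNIV"
    unfolding fs_jump_def by simp
  have xy1: "\<exists>j. (x t, y j) \<in> E" for t
  proof -
    have "E``{x t} \<in> (\<lambda>i. E `` {x i}) ` UNIV" by (rule rangeI)
    then have "E``{x t} \<in> (\<lambda>i. E `` {y i}) ` UNIV" by (simp only: img)
    then obtain j where "E``{x t} = E``{y j}" by (rule imageE)
    then have "(x t, y j) \<in> E" using eq_equiv_class_iff[OF eq, of "x t" "y j"] by simp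
    then show ?thesis by blast
  qed
  have xy2: "\<exists>i. (x i, y t) \<in> E" for t
  proof -
    have "E``{y t} \<in> (\<lambda>i. E `` {y i}) ` UNIV" by (rule rangeI)
    then have "E``{y t} \<in> (\<lambda>i. E `` {x i}) ` UNIV" by (simp only: img)
    then obtain j where "E``{y t} = E``{x j}" by (rule imageE)
    then have "(x j, y t) \<in> E" using eq_equiv_class_iff[OF eq, of "x j" "y t"] by simp
    then show ?thesis by blast
  qed
  have "\<forall>n. \<exists>Nf. snd Nf 0 \<in> range x \<and> snd Nf (fst Nf) \<in> range y
      \<and> (\<forall>i<fst Nf. (snd Nf i, snd Nf (Suc i)) \<in> G)
      \<and> (even n \<longrightarrow> snd Nf 0 = x (n div 2)) \<and> (odd n \<longrightarrow> snd Nf (fst Nf) = y (n div 2))"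
  proof
    fix n
    show "\<exists>Nf. snd Nf 0 \<in> range x \<and> snd Nf (fst Nf) \<in> range y
      \<and> (\<forall>i<fst Nf. (snd Nf i, snd Nf (Suc i)) \<in> G)
      \<and> (even n \<longrightarrow> snd Nf 0 = x (n div 2)) \<and> (odd n \<longrightarrow> snd Nf (fst Nf) = y (n div 2))"
    proof (cases "even n")
      case True
      obtain j where "(x (n div 2), y j) \<in> G\<^sup>*" using xy1 GE by blast
      from walk_exists[OF this] obtain N f where f: "f 0 = x (n div 2)" "f N = y j" "\<forall>i<N. (f i, f (Suc i)) \<in> G"
        by blast
      show ?thesis using True f by (intro exI[of _ "(N, f)"]) auto
    next
      case False
      obtain j where "(x j, y (n div 2)) \<in> G\<^sup>*" using xy2 GE by blast
      from walk_exists[OF this] obtain N f where f: "f 0 = x j" "f N = y (n div 2)" "\<forall>i<N. (f i, f (Suc i)) \<in> G"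
        by blast
      show ?thesis using False f by (intro exI[of _ "(N, f)"]) auto
    qed
  qed
  from choice[OF this] obtain c where c: "\<forall>n. snd (c n) 0 \<in> range x \<and> snd (c n) (fst (c n)) \<in> range y
      \<and> (\<forall>i<fst (c n). (snd (c n) i, snd (c n) (Suc i)) \<in> G)
      \<and> (even n \<longrightarrow> snd (c n) 0 = x (n div 2)) \<and> (odd n \<longrightarrow> snd (c n) (fst (c n)) = y (n div 2))"
    by blast
  define N where "N n = fst (c n)" for n
  define f where "f n = snd (c n)" for n
  have f0: "f n 0 \<in> range x" for n using c[rule_format, of n] unfolding f_def by simp
  have fN: "f n (N n) \<in> range y" for n using c[rule_format, of n] unfolding f_def N_def by simp
  have fw: "i < N n \<Longrightarrow> (f n i, f n (Suc i)) \<in> G" for n i using c[rule_format, of n] unfolding f_def N_def by simp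
  have fx: "f (2*t) 0 = x t" for t using c[rule_format, of "2*t"] unfolding f_def by simp
  have fy: "f (2*t+1) (N (2*t+1)) = y t" for t using c[rule_format, of "2*t+1"] unfolding f_def N_def by simp
  define V1 where "V1 n k = f n (min k (N n))" for n k
  define V2 where "V2 n k = f n (N n - k)" for n k
  define W1 where "W1 m = V1 (fst (prod_decode m)) (snd (prod_decode m))" for m
  define W2 where "W2 m = V2 (fst (prod_decode m)) (snd (prod_decode m))" for m
  have W1e: "W1 (prod_encode (n, k)) = V1 n k" for n k unfolding W1_def by simp
  have W2e: "W2 (prod_encode (n, k)) = V2 n k" for n k unfolding W2_def by simp
  have allm: "P m" if "\<And>n k. P (prod_encode (n, k))" for P m
  proof -
    obtain n k where nk: "prod_decode m = (n, k)" by (cases "prod_decode m")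
    have "m = prod_encode (n, k)" using prod_decode_inverse[of m] nk by simp
    then show ?thesis using that by simp
  qed
  have r1: "Rp G x W1"
    unfolding Rp_def
  proof (intro conjI allI)
    fix m
    show "(\<exists>j. W1 m = x j) \<or> (\<exists>m'\<in>{..<m}. W1 m = W1 m' \<or> (W1 m', W1 m) \<in> G)"
    proof (rule allm)
      fix n k
      show "(\<exists>j. W1 (prod_encode (n, k)) = x j) \<or> (\<exists>m'\<in>{..<prod_encode (n, k)}.
          W1 (prod_encode (n, k)) = W1 m' \<or> (W1 m', W1 (prod_encode (n, k))) \<in> G)"
      proof (cases k)
        case 0
        then show ?thesis using f0[of n] by (auto simp: W1e V1_def)
      next
        case (Suc k')
        have lt: "prod_encode (n, k') \<in> {..<prod_encode (n, k)}"
          using prod_encode_less_Suc Suc by auto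
        have "V1 n k = V1 n k' \<or> (V1 n k', V1 n k) \<in> G"
          using fw[of k' n] Suc by (cases "k' < N n") (auto simp: V1_def min_def)
        then have "W1 (prod_encode (n, k)) = W1 (prod_encode (n, k')) \<or> (W1 (prod_encode (n, k')), W1 (prod_encode (n, k))) \<in> G"
          by (simp only: W1e)
        then show ?thesis using lt by blast
      qed
    qed
  next
    fix t
    have "x t = W1 (prod_encode (2*t, 0))" using fx[of t] by (simp add: W1e V1_def)
    then show "\<exists>j. x t = W1 j" by blast
  qed
  have rW: "W2 m \<in> range W1" "W1 m \<in> range W2" for m
  proof -
    show "W2 m \<in> range W1"
    proof (rule allm[of "\<lambda>m. W2 m \<in> range W1"])
      fix n k
      have "W2 (prod_encode (n, k)) = W1 (prod_encode (n, N n - k))"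
        by (simp add: W1e W2e V1_def V2_def)
      then show "W2 (prod_encode (n, k)) \<in> range W1" by simp
    qed
    show "W1 m \<in> range W2"
    proof (rule allm[of "\<lambda>m. W1 m \<in> range W2"])
      fix n k
      have "W1 (prod_encode (n, k)) = W2 (prod_encode (n, N n - min k (N n)))"
        by (simp add: W1e W2e V1_def V2_def)
      then show "W1 (prod_encode (n, k)) \<in> range W2" by simp
    qed
  qed
  have r2: "Rp G W1 W2"
    unfolding Rp_def
  proof (intro conjI allI)
    fix k
    show "\<exists>j. W1 k = W2 j" using rW(2)[of k] by auto
    show "(\<exists>j. W2 k = W1 j) \<or> (\<exists>m\<in>{..<k}. W2 k = W2 m \<or> (W2 m, W2 k) \<in> G)"
      using rW(1)[of k] by auto
  qed
  have r3: "Rp G y W2"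
    unfolding Rp_def
  proof (intro conjI allI)
    fix m
    show "(\<exists>j. W2 m = y j) \<or> (\<exists>m'\<in>{..<m}. W2 m = W2 m' \<or> (W2 m', W2 m) \<in> G)"
    proof (rule allm)
      fix n k
      show "(\<exists>j. W2 (prod_encode (n, k)) = y j) \<or> (\<exists>m'\<in>{..<prod_encode (n, k)}.
          W2 (prod_encode (n, k)) = W2 m' \<or> (W2 m', W2 (prod_encode (n, k))) \<in> G)"
      proof (cases k)
        case 0
        then show ?thesis using fN[of n] by (auto simp: W2e V2_def)
      next
        case (Suc k')
        have lt: "prod_encode (n, k') \<in> {..<prod_encode (n, k)}"
          using prod_encode_less_Suc Suc by auto
        have "V2 n k = V2 n k' \<or> (V2 n k', V2 n k) \<in> G"
        proof (cases "k' < N n")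
          case True
          then have e: "N n - k' = Suc (N n - Suc k')" by simp
          have "(f n (N n - Suc k'), f n (Suc (N n - Suc k'))) \<in> G"
            using fw[of "N n - Suc k'" n] True by simp
          then have "(f n (Suc (N n - Suc k')), f n (N n - Suc k')) \<in> G"
            using symD[OF sG] by blast
          then have "(V2 n k', V2 n k) \<in> G"
            using Suc e unfolding V2_def by simp
          then show ?thesis by simp
        next
          case False
          then show ?thesis using Suc by (simp add: V2_def)
        qed
        then have "W2 (prod_encode (n, k)) = W2 (prod_encode (n, k')) \<or> (W2 (prod_encode (n, k')), W2 (prod_encode (n, k))) \<in> G"
          by (simp only: W2e)
        then show ?thesis using lt by blast
      qed
    qed
  next
    fix t
    have "y t = W2 (prod_encode (2*t+1, 0))" using fy[of t] by (simp add: W2e V2_def)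
    then show "\<exists>j. y t = W2 j" by blast
  qed
  show ?thesis using r1 r2 r3 by blast
qed


theorem theorem7p6:
  fixes E :: "('a::polish_space \<times> 'a) set"
  assumes "equiv UNIV E"
    and "borel_graphable E"
  shows "borel_graphable (fs_jump E)"
proof -
  note eq = assms(1)
  obtain G where G: "G \<in> sets borel" "sym G" "irrefl G" "G\<^sup>* = E"
    using assms(2) unfolding borel_graphable_def by blast
  have GE: "G \<subseteq> E" using G(4) by blast
  define H where "H = {p::'a pp. (Rp G (fst p) (snd p) \<or> Rp G (snd p) (fst p)) \<and> (\<exists>k. fst p k \<noteq> snd p k)}"
  define R where "R = {p::'a pp. Rp G (fst p) (snd p)}"
  have HB: "H \<in> sets borel" unfolding H_def by (rule H_borel[OF G(1)])
  have Hs: "sym H" unfolding H_def sym_def by (auto; metis)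
  have Hi: "irrefl H" unfolding H_def irrefl_def by auto
  have HR: "H = (R \<union> R\<inverse>) - Id" unfolding H_def R_def by (auto simp: fun_eq_iff)
  have Hstar: "H\<^sup>* = (R \<union> R\<inverse>)\<^sup>*" unfolding HR by (rule rtrancl_r_diff_Id)
  have RJ: "(R \<union> R\<inverse>) \<subseteq> fs_jump E"
  proof
    fix p assume "p \<in> R \<union> R\<inverse>"
    then show "p \<in> fs_jump E"
    proof
      assume "p \<in> R"
      then show ?thesis using Rp_sound[OF eq GE, of "fst p" "snd p"] unfolding R_def by simp
    next
      assume "p \<in> R\<inverse>"
      then have "(snd p, fst p) \<in> fs_jump E"
        using Rp_sound[OF eq GE, of "snd p" "fst p"] unfolding R_def by auto
      then show ?thesis unfolding fs_jump_def by (cases p) simp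
    qed
  qed
  have "(R \<union> R\<inverse>)\<^sup>* = fs_jump E"
  proof
    show "(R \<union> R\<inverse>)\<^sup>* \<subseteq> fs_jump E"
    proof
      fix p assume "p \<in> (R \<union> R\<inverse>)\<^sup>*"
      then obtain a b where p: "p = (a, b)" "(a, b) \<in> (R \<union> R\<inverse>)\<^sup>*" by (cases p) auto
      from p(2) have "(a, b) \<in> fs_jump E"
      proof (induction rule: rtrancl_induct)
        case base
        then show ?case unfolding fs_jump_def by simp
      next
        case (step b c)
        then have "(b, c) \<in> fs_jump E" using RJ by blast
        then show ?case using step.IH unfolding fs_jump_def by simp
      qed
      then show "p \<in> fs_jump E" using p(1) by simp
    qed
    show "fs_jump E \<subseteq> (R \<union> R\<inverse>)\<^sup>*"
    proof
      fix p assume pj: "p \<in> fs_jump E"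
      obtain x y where p: "p = (x, y)" by (cases p)
      from Rp_complete[OF eq G(4) G(2)] pj p obtain W1 W2 where
        W: "Rp G x W1" "Rp G W1 W2" "Rp G y W2" by blast
      have "(x, W1) \<in> R \<union> R\<inverse>" "(W1, W2) \<in> R \<union> R\<inverse>" "(W2, y) \<in> R \<union> R\<inverse>"
        using W unfolding R_def by auto
      then have "(x, y) \<in> (R \<union> R\<inverse>)\<^sup>*"
        by (meson r_into_rtrancl rtrancl_trans)
      then show "p \<in> (R \<union> R\<inverse>)\<^sup>*" using p by simp
    qed
  qed
  then have "H\<^sup>* = fs_jump E" using Hstar by simp
  then show ?thesis unfolding borel_graphable_def using HB Hs Hi by blast
qed

end
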